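(* Let $\mathcal{A}$ be a complex Banach algebra with unity, $c\in\mathcal{A}$, and $M=\begin{pmatrix}1&1\\ c&0\end{pmatrix}\in M_{2}(\mathcal{A})$. Then $c\in\mathcal{A}^{qnil}$ if and only if $M$ is g-Hirano invertible in $M_{2}(\mathcal{A})$.
   Context: $M_{2}(\mathcal{A})$ is the Banach algebra of $2\times2$ matrices over $\mathcal{A}$. For a unital Banach algebra $\mathcal{B}$, $\mathcal{B}^{qnil}$ is the set of elements with spectrum $\{0\}$. An element $a\in\mathcal{B}$ is g-Hirano invertible if there exists $x\in\mathcal{B}$ with $xax=x$, $ax=xa$ and $a^{2}-ax\in\mathcal{B}^{qnil}$. *)

theory Defs
  imports "HOL-Analysis.Analysis"
begin

class cx_algebra_1 = ring_1 +
  fixes scaleC :: "complex \<Rightarrow> 'a \<Rightarrow> 'a"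
  assumes scaleC_add_right: "scaleC z (x + y) = scaleC z x + scaleC z y"
    and scaleC_add_left: "scaleC (z + w) x = scaleC z x + scaleC w x"
    and scaleC_scaleC: "scaleC z (scaleC w x) = scaleC (z * w) x"
    and scaleC_one: "scaleC 1 x = x"
    and scaleC_mult_left: "scaleC z x * y = scaleC z (x * y)"
    and scaleC_mult_right: "x * scaleC z y = scaleC z (x * y)"

class cx_banach_algebra_1 = cx_algebra_1 + real_normed_algebra_1 + banach +
  assumes scaleC_of_real: "scaleC (complex_of_real r) x = scaleR r x"
    and norm_scaleC: "norm (scaleC z x) = cmod z * norm x"

definition inv_in :: "'a::ring_1 \<Rightarrow> bool" where
  "inv_in a \<longleftrightarrow> (\<exists>b. a * b = 1 \<and> b * a = 1)"

definition cspectrum :: "'a::cx_algebra_1 \<Rightarrow> complex set" where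
  "cspectrum a = {z. \<not> inv_in (a - scaleC z 1)}"

definition qnil :: "'a::cx_algebra_1 \<Rightarrow> bool" where
  "qnil a \<longleftrightarrow> cspectrum a = {0}"

definition g_hirano :: "'a::cx_algebra_1 \<Rightarrow> bool" where
  "g_hirano a \<longleftrightarrow> (\<exists>x. x * a * x = x \<and> a * x = x * a \<and> qnil (a ^ 2 - a * x))"

datatype 'a m2 = M2 (e11: 'a) (e12: 'a) (e21: 'a) (e22: 'a)

instantiation m2 :: (ring_1) ring_1
begin
definition "0 = M2 0 0 0 0"
definition "1 = M2 1 0 0 1"
definition "a + b = M2 (e11 a + e11 b) (e12 a + e12 b) (e21 a + e21 b) (e22 a + e22 b)"
definition "a - b = M2 (e11 a - e11 b) (e12 a - e12 b) (e21 a - e21 b) (e22 a - e22 b)"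
definition "- a = M2 (- e11 a) (- e12 a) (- e21 a) (- e22 a)"
definition "a * b = M2 (e11 a * e11 b + e12 a * e21 b) (e11 a * e12 b + e12 a * e22 b)
                      (e21 a * e11 b + e22 a * e21 b) (e21 a * e12 b + e22 a * e22 b)"
instance
  by standard
    (simp_all add: zero_m2_def one_m2_def plus_m2_def minus_m2_def uminus_m2_def
      times_m2_def algebra_simps)
end

instantiation m2 :: (cx_algebra_1) cx_algebra_1
begin
definition scaleC_m2 :: "complex \<Rightarrow> 'a m2 \<Rightarrow> 'a m2" where
  "scaleC_m2 z a = M2 (scaleC z (e11 a)) (scaleC z (e12 a)) (scaleC z (e21 a)) (scaleC z (e22 a))"
instance
  by standard
    (simp_all add: scaleC_m2_def plus_m2_def times_m2_def scaleC_add_right scaleC_add_left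
      scaleC_scaleC scaleC_one scaleC_mult_left scaleC_mult_right)
end

end

theory Submission
  imports Defs "HOL-Computational_Algebra.Formal_Power_Series"
begin


context cx_algebra_1
begin

lemma scaleC_zero_left [simp]: "scaleC 0 x = 0"
proof -
  have "scaleC (0+0) x = scaleC 0 x + scaleC 0 x" by (rule scaleC_add_left)
  then show ?thesis by simp
qed

lemma scaleC_zero_right [simp]: "scaleC z 0 = 0"
proof -
  have "scaleC z (0+0) = scaleC z 0 + scaleC z 0" by (rule scaleC_add_right)
  then show ?thesis by simp
qed

lemma scaleC_minus_left: "scaleC (- z) x = - scaleC z x"
proof -
  have "scaleC (- z + z) x = scaleC (-z) x + scaleC z x" by (rule scaleC_add_left)
  then show ?thesis by (simp add: eq_neg_iff_add_eq_0)
qed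

lemma scaleC_minus_right: "scaleC z (- x) = - scaleC z x"
proof -
  have "scaleC z (- x + x) = scaleC z (-x) + scaleC z x" by (rule scaleC_add_right)
  then show ?thesis by (simp add: eq_neg_iff_add_eq_0)
qed

lemma scaleC_diff_left: "scaleC (z - w) x = scaleC z x - scaleC w x"
  using scaleC_add_left[of z "-w" x] by (simp add: scaleC_minus_left)

lemma scaleC_diff_right: "scaleC z (x - y) = scaleC z x - scaleC z y"
  using scaleC_add_right[of z x "-y"] by (simp add: scaleC_minus_right)

lemma scaleC_conv_mult: "scaleC z x = scaleC z 1 * x"
  using scaleC_mult_left[of z 1 x] by simp

lemma scaleC_conv_mult2: "scaleC z x = x * scaleC z 1"
  using scaleC_mult_right[of x z 1] by simp

lemma scaleC_commute: "scaleC z 1 * x = x * scaleC z 1"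
  using scaleC_conv_mult scaleC_conv_mult2 by metis

lemma scaleC_power: "(scaleC z x) ^ n = scaleC (z ^ n) (x ^ n)"
proof (induction n)
  case 0 then show ?case by (simp add: scaleC_one)
next
  case (Suc n)
  have "scaleC z x ^ Suc n = scaleC z x * scaleC (z ^ n) (x ^ n)" by (simp add: Suc)
  also have "\<dots> = scaleC (z ^ Suc n) (x ^ Suc n)"
    by (simp add: scaleC_mult_left scaleC_mult_right scaleC_scaleC mult.commute)
  finally show ?case .
qed

lemma scaleC_sum_left: "scaleC (sum f A) x = (\<Sum>i\<in>A. scaleC (f i) x)"
  by (induction A rule: infinite_finite_induct) (simp_all add: scaleC_add_left)

lemma scaleC_sum_right: "scaleC z (sum f A) = (\<Sum>i\<in>A. scaleC z (f i))"
  by (induction A rule: infinite_finite_induct) (simp_all add: scaleC_add_right)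

lemma scaleC_of_nat: "scaleC (of_nat n) x = of_nat n * x"
  by (induction n) (simp_all add: scaleC_add_left scaleC_one distrib_right)

lemma scaleC_one_one: "scaleC 1 x = x" by (rule scaleC_one)

end

lemma geom_ring:
  fixes v :: "'a::ring_1"
  shows "1 - v ^ n = (1 - v) * (\<Sum>j<n. v ^ j)" and "1 - v ^ n = (\<Sum>j<n. v ^ j) * (1 - v)"
proof -
  have "1 - v ^ n = (1 - v) * (\<Sum>j<n. v ^ j) \<and> 1 - v ^ n = (\<Sum>j<n. v ^ j) * (1 - v)"
  proof (induction n)
    case 0 then show ?case by simp
  next
    case (Suc n)
    have a: "v ^ n * v = v * v ^ n" by (simp add: power_commutes)
    from Suc show ?case
      by (simp add: algebra_simps a)
  qed
  then show "1 - v ^ n = (1 - v) * (\<Sum>j<n. v ^ j)" and "1 - v ^ n = (\<Sum>j<n. v ^ j) * (1 - v)"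
    by auto
qed

lemma roots_sum:
  fixes \<omega> :: complex
  assumes "\<omega> ^ K = 1" "\<And>j. 0 < j \<Longrightarrow> j < K \<Longrightarrow> \<omega> ^ j \<noteq> 1" "j < K"
  shows "(\<Sum>k<K. (\<omega> ^ j) ^ k) = (if j = 0 then of_nat K else 0)"
proof (cases "j = 0")
  case True then show ?thesis by simp
next
  case False
  then have ne: "\<omega> ^ j \<noteq> 1" using assms by auto
  have "(\<omega> ^ j) ^ K = 1" using assms(1) by (metis power_mult mult.commute power_one)
  then show ?thesis using geometric_sum[OF ne, of K] False by simp
qed

lemma avg_identity:
  fixes y :: "'a::cx_algebra_1" and \<omega> \<theta> :: complex and G :: "nat \<Rightarrow> 'a"
  assumes w1: "\<omega> ^ K = 1" and w2: "\<And>j. 0 < j \<Longrightarrow> j < K \<Longrightarrow> \<omega> ^ j \<noteq> 1"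
    and GL: "\<And>k. k < K \<Longrightarrow> G k * (1 - scaleC (\<theta> * \<omega> ^ k) y) = 1"
    and GR: "\<And>k. k < K \<Longrightarrow> (1 - scaleC (\<theta> * \<omega> ^ k) y) * G k = 1"
  shows "(1 - scaleC (\<theta> ^ K) (y ^ K)) * (\<Sum>k<K. G k) = of_nat K"
    and "(\<Sum>k<K. G k) * (1 - scaleC (\<theta> ^ K) (y ^ K)) = of_nat K"
proof -
  define v where "v k = scaleC (\<theta> * \<omega> ^ k) y" for k
  have vK: "v k ^ K = scaleC (\<theta> ^ K) (y ^ K)" for k
  proof -
    have "(\<theta> * \<omega> ^ k) ^ K = \<theta> ^ K"
      using w1 by (simp add: power_mult_distrib power_mult[symmetric] mult.commute[of k K] power_mult)
    then show ?thesis by (simp add: v_def scaleC_power)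
  qed
  have e1: "(1 - scaleC (\<theta> ^ K) (y ^ K)) * G k = (\<Sum>j<K. v k ^ j)" if "k < K" for k
  proof -
    have "(1 - scaleC (\<theta> ^ K) (y ^ K)) * G k = (\<Sum>j<K. v k ^ j) * ((1 - v k) * G k)"
      using geom_ring(2)[of "v k" K] vK[of k] by (simp add: mult.assoc)
    also have "\<dots> = (\<Sum>j<K. v k ^ j)" using GR[OF that] by (simp add: v_def)
    finally show ?thesis .
  qed
  have e2: "G k * (1 - scaleC (\<theta> ^ K) (y ^ K)) = (\<Sum>j<K. v k ^ j)" if "k < K" for k
  proof -
    have "G k * (1 - scaleC (\<theta> ^ K) (y ^ K)) = (G k * (1 - v k)) * (\<Sum>j<K. v k ^ j)"
      using geom_ring(1)[of "v k" K] vK[of k] by (simp add: mult.assoc)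
    also have "\<dots> = (\<Sum>j<K. v k ^ j)" using GL[OF that] by (simp add: v_def)
    finally show ?thesis .
  qed
  have tot: "(\<Sum>k<K. \<Sum>j<K. v k ^ j) = of_nat K"
  proof -
    have "(\<Sum>k<K. \<Sum>j<K. v k ^ j) = (\<Sum>j<K. \<Sum>k<K. scaleC ((\<theta> * \<omega> ^ k) ^ j) (y ^ j))"
      by (subst sum.swap) (simp add: v_def scaleC_power)
    also have "\<dots> = (\<Sum>j<K. scaleC (\<theta> ^ j * (\<Sum>k<K. (\<omega> ^ j) ^ k)) (y ^ j))"
      by (simp add: scaleC_sum_left sum_distrib_left power_mult_distrib power_mult[symmetric] mult.commute)
    also have "\<dots> = (\<Sum>j<K. (if j = 0 then of_nat K else 0))"
      by (rule sum.cong) (simp_all add: roots_sum[OF w1 w2] scaleC_of_nat)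
    also have "\<dots> = of_nat K" by (cases K) (simp_all add: sum.delta)
    finally show ?thesis .
  qed
  show "(1 - scaleC (\<theta> ^ K) (y ^ K)) * (\<Sum>k<K. G k) = of_nat K"
    by (simp add: sum_distrib_left e1 tot)
  show "(\<Sum>k<K. G k) * (1 - scaleC (\<theta> ^ K) (y ^ K)) = of_nat K"
    by (simp add: sum_distrib_right e2 tot)
qed




definition ginv :: "'a::ring_1 \<Rightarrow> 'a" where
  "ginv a = (SOME b. a * b = 1 \<and> b * a = 1)"

lemma ginv: assumes "inv_in a" shows "a * ginv a = 1" "ginv a * a = 1"
proof -
  from assms obtain b where "a * b = 1 \<and> b * a = 1" unfolding inv_in_def by blast
  then have "a * ginv a = 1 \<and> ginv a * a = 1" unfolding ginv_def by (rule someI)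
  then show "a * ginv a = 1" "ginv a * a = 1" by auto
qed

lemma resolvent_id:
  fixes u :: "'a::cx_algebra_1"
  assumes "G1 * (1 - scaleC l u) = 1" "(1 - scaleC m u) * G2 = 1"
  shows "G1 - G2 = scaleC (l - m) (G1 * u * G2)"
proof -
  have "G1 - G2 = G1 * ((1 - scaleC m u) * G2) - (G1 * (1 - scaleC l u)) * G2"
    using assms by simp
  also have "\<dots> = G1 * ((1 - scaleC m u) - (1 - scaleC l u)) * G2"
    by (simp add: algebra_simps)
  also have "(1 - scaleC m u) - (1 - scaleC l u) = scaleC (l - m) u"
    by (simp add: scaleC_diff_left)
  finally show ?thesis by (simp add: scaleC_mult_left scaleC_mult_right mult.assoc)
qed

lemma resolvent_cont:
  fixes u :: "'a::cx_banach_algebra_1"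
  assumes H: "\<And>l. cmod l \<le> 1 \<Longrightarrow> inv_in (1 - scaleC l u)"
  shows "continuous_on (cball 0 1) (\<lambda>l. ginv (1 - scaleC l u))"
proof -
  define g where "g l = ginv (1 - scaleC l u)" for l
  have gL: "g l * (1 - scaleC l u) = 1" and gR: "(1 - scaleC l u) * g l = 1" if "cmod l \<le> 1" for l
    using ginv[OF H[OF that]] by (simp_all add: g_def)
  have res: "norm (g l - g m) \<le> cmod (l - m) * norm (g l) * norm u * norm (g m)"
    if "cmod l \<le> 1" "cmod m \<le> 1" for l m
  proof -
    have "g l - g m = scaleC (l - m) (g l * u * g m)"
      by (rule resolvent_id[OF gL[OF that(1)] gR[OF that(2)]])
    then have "norm (g l - g m) = cmod (l - m) * norm (g l * u * g m)" by (simp add: norm_scaleC)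
    also have "norm (g l * u * g m) \<le> norm (g l) * norm u * norm (g m)"
      by (metis mult_right_mono norm_ge_zero norm_mult_ineq order_trans)
    finally show ?thesis by (simp add: mult_left_mono mult.assoc)
  qed
  have "continuous_on (cball 0 1) g"
    unfolding continuous_on_iff
  proof (intro ballI allI impI)
    fix m e assume m: "m \<in> cball (0::complex) 1" and e: "(0::real) < e"
    define n where "n = norm (g m)"
    define a where "a = norm u"
    have n0: "n \<ge> 0" and a0: "a \<ge> 0" by (simp_all add: n_def a_def)
    define d where "d = min (1 / (2 * (a + 1) * (n + 1))) (e / (2 * (a + 1) * (n + 1) ^ 2))"
    have dpos: "d > 0" using n0 a0 e by (simp add: d_def)
    show "\<exists>d>0. \<forall>l\<in>cball 0 1. dist l m < d \<longrightarrow> dist (g l) (g m) < e"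
    proof (intro exI conjI ballI impI)
      show "d > 0" by (rule dpos)
      fix l assume l: "l \<in> cball (0::complex) 1" and dl: "dist l m < d"
      define r where "r = cmod (l - m)"
      have r: "r < d" "r \<ge> 0" using dl by (simp_all add: r_def dist_norm)
      have lm: "cmod l \<le> 1" "cmod m \<le> 1" using l m by auto
      have R: "norm (g l - g m) \<le> r * norm (g l) * a * n"
        using res[OF lm] by (simp add: r_def a_def n_def)
      have k: "r * a * n \<le> 1/2"
      proof -
        have "r * ((a + 1) * (n + 1)) \<le> 1/2"
        proof -
          have "r \<le> 1 / (2 * (a + 1) * (n + 1))" using r unfolding d_def by simp
          moreover have X: "2 * (a + 1) * (n + 1) > 0" using n0 a0 by simp
          ultimately have "r * (2 * (a + 1) * (n + 1)) \<le> 1" by (simp add: pos_le_divide_eq)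
          then show ?thesis by (simp add: algebra_simps)
        qed
        moreover have "r * a * n \<le> r * ((a + 1) * (n + 1))"
          using r(2) n0 a0 by (simp add: mult.assoc mult_left_mono mult_mono)
        ultimately show ?thesis by linarith
      qed
      have gl: "norm (g l) \<le> 2 * n"
      proof -
        have "norm (g l) \<le> n + norm (g l - g m)"
          by (metis n_def norm_triangle_sub add.commute)
        also have "\<dots> \<le> n + r * a * n * norm (g l)" using R by (simp add: algebra_simps)
        finally have "norm (g l) \<le> n + r * a * n * norm (g l)" .
        moreover have "r * a * n * norm (g l) \<le> 1/2 * norm (g l)"
          using k by (intro mult_right_mono) auto
        ultimately show ?thesis by linarith
      qed
      have "norm (g l - g m) \<le> r * (2 * n) * a * n"
        using R gl r(2) a0 n0 by (smt (verit) mult_left_mono mult_right_mono mult_nonneg_nonneg)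
      also have "\<dots> = r * (2 * a * n ^ 2)" by (simp add: power2_eq_square)
      also have "\<dots> < e"
      proof -
        have "r * (2 * a * n ^ 2) \<le> r * (2 * (a + 1) * (n + 1) ^ 2)"
          using r(2) a0 n0 by (intro mult_left_mono) (auto intro!: mult_mono power_mono)
        also have "\<dots> < d * (2 * (a + 1) * (n + 1) ^ 2)"
          using r a0 n0 by (intro mult_strict_right_mono) auto
        also have "\<dots> \<le> e"
        proof -
          have X: "2 * (a + 1) * (n + 1) ^ 2 > 0" using a0 n0 by simp
          have "d \<le> e / (2 * (a + 1) * (n + 1) ^ 2)" by (simp add: d_def)
          then show ?thesis using pos_le_divide_eq[OF X] by blast
        qed
        finally show ?thesis .
      qed
      finally show "dist (g l) (g m) < e" by (simp add: dist_norm)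
    qed
  qed
  then show ?thesis by (simp add: g_def)
qed



lemma key_est:
  fixes u :: "'a::cx_banach_algebra_1" and g :: "complex \<Rightarrow> 'a"
  assumes gL: "\<And>l. cmod l \<le> 1 \<Longrightarrow> g l * (1 - scaleC l u) = 1"
    and gR: "\<And>l. cmod l \<le> 1 \<Longrightarrow> (1 - scaleC l u) * g l = 1"
    and Lip: "\<And>l m. cmod l \<le> 1 \<Longrightarrow> cmod m \<le> 1 \<Longrightarrow> norm (g l - g m) \<le> Lc * cmod (l - m)"
    and Lc: "Lc \<ge> 0" and K: "K > 0" and rho: "0 \<le> \<rho>" "\<rho> \<le> 1"
  shows "2 * norm (scaleC (of_real (\<rho> ^ K)) (u ^ K))
     \<le> (1 + norm (scaleC (of_real (\<rho> ^ K)) (u ^ K))) ^ 2 * (Lc * cmod (1 - exp (of_real (pi / K) * \<i>)))"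
proof -
  define \<omega> where "\<omega> = exp (of_real (2 * pi / K) * \<i>)"
  define \<eta> where "\<eta> = exp (of_real (pi / K) * \<i>)"
  define w where "w = scaleC (of_real (\<rho> ^ K)) (u ^ K)"
  have wK: "\<omega> ^ K = 1"
  proof -
    have "\<omega> ^ K = exp (of_nat K * (of_real (2 * pi / K) * \<i>))"
      by (simp only: \<omega>_def exp_of_nat_mult)
    also have "of_nat K * (of_real (2 * pi / K) * \<i>) = 2 * of_real pi * \<i>"
      using K by (simp add: field_simps)
    finally show ?thesis by simp
  qed
  have wj: "\<omega> ^ j \<noteq> 1" if "0 < j" "j < K" for j
  proof
    assume "\<omega> ^ j = 1"
    moreover have "\<omega> ^ j = exp (complex_of_real (2 * pi * j / K) * \<i>)"
    proof -
      have "\<omega> ^ j = exp (of_nat j * (of_real (2 * pi / K) * \<i>))"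
        by (simp only: \<omega>_def exp_of_nat_mult)
      also have "of_nat j * (of_real (2 * pi / K) * \<i>) = complex_of_real (2 * pi * j / K) * \<i>"
        by simp
      finally show ?thesis .
    qed
    ultimately obtain n :: int where n: "2 * pi * j / K = of_int (2 * n) * pi"
      by (auto simp: exp_eq_1)
    then have "(real j / K) * (2 * pi) = of_int n * (2 * pi)" by (simp add: field_simps)
    then have "real j / K = of_int n" using pi_gt_zero by (metis mult_cancel_right pi_not_less_zero less_irrefl mult_eq_0_iff zero_neq_numeral)
    moreover have "0 < real j / K" "real j / K < 1" using that by auto
    ultimately show False by (metis of_int_0_less_iff of_int_less_1_iff not_less zero_less_imp_eq_int
          int_one_le_iff_zero_less nat_int nat_less_iff of_int_1_less_iff)
  qed
  have nw: "cmod (\<omega> ^ k) = 1" for k by (simp add: \<omega>_def norm_power)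
  have ne: "cmod \<eta> = 1" by (simp add: \<eta>_def)
  have eK: "\<eta> ^ K = -1"
  proof -
    have "\<eta> ^ K = exp (of_nat K * (of_real (pi / K) * \<i>))"
      by (simp only: \<eta>_def exp_of_nat_mult)
    also have "of_nat K * (of_real (pi / K) * \<i>) = of_real pi * \<i>"
      using K by (simp add: field_simps)
    finally show ?thesis by simp
  qed
  define GA where "GA k = g (of_real \<rho> * \<omega> ^ k)" for k
  define GB where "GB k = g ((of_real \<rho> * \<eta>) * \<omega> ^ k)" for k
  have mA: "cmod (of_real \<rho> * \<omega> ^ k) \<le> 1" for k using rho by (simp add: norm_mult nw)
  have mB: "cmod ((of_real \<rho> * \<eta>) * \<omega> ^ k) \<le> 1" for k using rho by (simp add: norm_mult nw ne)
  have A: "(1 - scaleC (of_real \<rho> ^ K) (u ^ K)) * (\<Sum>k<K. GA k) = of_nat K"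
          "(\<Sum>k<K. GA k) * (1 - scaleC (of_real \<rho> ^ K) (u ^ K)) = of_nat K"
    by (rule avg_identity[OF wK wj], auto simp: GA_def intro!: gL gR mA)+
  have B: "(1 - scaleC ((of_real \<rho> * \<eta>) ^ K) (u ^ K)) * (\<Sum>k<K. GB k) = of_nat K"
          "(\<Sum>k<K. GB k) * (1 - scaleC ((of_real \<rho> * \<eta>) ^ K) (u ^ K)) = of_nat K"
    by (rule avg_identity[OF wK wj], auto simp: GB_def intro!: gL gR mB)+
  have wA: "scaleC (of_real \<rho> ^ K) (u ^ K) = w" by (simp add: w_def)
  have wB: "1 - scaleC ((of_real \<rho> * \<eta>) ^ K) (u ^ K) = 1 + w"
    by (simp add: w_def power_mult_distrib eK scaleC_minus_left)
  define SA where "SA = (\<Sum>k<K. GA k)"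
  define SB where "SB = (\<Sum>k<K. GB k)"
  have A1: "(1 - w) * SA = of_nat K" and B2: "SB * (1 + w) = of_nat K"
    using A B wA wB by (simp_all add: SA_def SB_def)
  have ident: "of_nat (2 * K) * w = (1 - w) * (SA - SB) * (1 + w)"
  proof -
    have "(1 - w) * (SA - SB) * (1 + w) = ((1 - w) * SA) * (1 + w) - (1 - w) * (SB * (1 + w))"
      by (simp add: algebra_simps)
    also have "\<dots> = of_nat K * (1 + w) - (1 - w) * of_nat K" by (simp add: A1 B2)
    also have "\<dots> = of_nat K * w + of_nat K * w" by (simp add: algebra_simps mult_of_nat_commute)
    also have "\<dots> = of_nat (2 * K) * w" by (simp only: mult_2 of_nat_add distrib_right)
    finally show ?thesis by simp
  qed
  have nSAB: "norm (SA - SB) \<le> of_nat K * (Lc * cmod (1 - \<eta>))"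
  proof -
    have "norm (SA - SB) = norm (\<Sum>k<K. GA k - GB k)" by (simp add: SA_def SB_def sum_subtractf)
    also have "\<dots> \<le> (\<Sum>k<K. Lc * cmod (1 - \<eta>))"
    proof (rule sum_norm_le)
      fix k assume "k \<in> {..<K}"
      have "norm (GA k - GB k) \<le> Lc * cmod (of_real \<rho> * \<omega> ^ k - (of_real \<rho> * \<eta>) * \<omega> ^ k)"
        unfolding GA_def GB_def by (rule Lip[OF mA mB])
      also have "cmod (of_real \<rho> * \<omega> ^ k - (of_real \<rho> * \<eta>) * \<omega> ^ k) = \<rho> * cmod (1 - \<eta>)"
      proof -
        have "of_real \<rho> * \<omega> ^ k - (of_real \<rho> * \<eta>) * \<omega> ^ k = of_real \<rho> * \<omega> ^ k * (1 - \<eta>)"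
          by (simp add: algebra_simps)
        then show ?thesis using rho by (simp add: norm_mult nw)
      qed
      also have "Lc * (\<rho> * cmod (1 - \<eta>)) \<le> Lc * cmod (1 - \<eta>)"
        using Lc rho by (intro mult_left_mono) (auto intro: mult_left_le_one_le)
      finally show "norm (GA k - GB k) \<le> Lc * cmod (1 - \<eta>)" .
    qed
    finally show ?thesis by simp
  qed
  have sc: "of_nat (2 * K) * w = (real (2 * K)) *\<^sub>R w"
    by (simp only: scaleR_conv_of_real of_real_of_nat_eq)
  have "of_nat (2 * K) * norm w = norm (of_nat (2 * K) * w)"
    unfolding sc norm_scaleR by simp
  also have "\<dots> \<le> norm (1 - w) * norm (SA - SB) * norm (1 + w)"
  proof -
    have "norm ((1 - w) * (SA - SB) * (1 + w)) \<le> norm ((1 - w) * (SA - SB)) * norm (1 + w)"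
      by (rule norm_mult_ineq)
    also have "\<dots> \<le> norm (1 - w) * norm (SA - SB) * norm (1 + w)"
      by (rule mult_right_mono[OF norm_mult_ineq norm_ge_zero])
    finally show ?thesis unfolding ident .
  qed
  also have "\<dots> \<le> (1 + norm w) * (of_nat K * (Lc * cmod (1 - \<eta>))) * (1 + norm w)"
  proof -
    have a: "norm (1 - w) \<le> 1 + norm w" using norm_triangle_ineq4[of 1 w] by simp
    have b: "norm (1 + w) \<le> 1 + norm w" using norm_triangle_ineq[of 1 w] by simp
    have c: "0 \<le> norm (SA - SB)" by simp
    have d: "0 \<le> 1 + norm w" by simp
    have "norm (1 - w) * norm (SA - SB) \<le> (1 + norm w) * (of_nat K * (Lc * cmod (1 - \<eta>)))"
      by (rule mult_mono[OF a nSAB d c])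
    then show ?thesis by (rule mult_mono[OF _ b]) (simp_all add: mult_nonneg_nonneg Lc)
  qed
  finally have "of_nat K * (2 * norm w) \<le> of_nat K * ((1 + norm w) ^ 2 * (Lc * cmod (1 - \<eta>)))"
    by (simp add: power2_eq_square algebra_simps)
  then have "2 * norm w \<le> (1 + norm w) ^ 2 * (Lc * cmod (1 - \<eta>))"
    using K by simp
  then show ?thesis by (simp add: w_def \<eta>_def)
qed

lemma powers_to_zero:
  fixes u :: "'a::cx_banach_algebra_1"
  assumes H: "\<And>l. cmod l \<le> 1 \<Longrightarrow> inv_in (1 - scaleC l u)"
  shows "(\<lambda>n. u ^ n) \<longlonglongrightarrow> 0"
proof -
  define g where "g l = ginv (1 - scaleC l u)" for l
  have gL: "g l * (1 - scaleC l u) = 1" and gR: "(1 - scaleC l u) * g l = 1" if "cmod l \<le> 1" for l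
    using ginv[OF H[OF that]] by (simp_all add: g_def)
  have "compact (g ` cball 0 1)"
    using compact_continuous_image[OF resolvent_cont[OF H] compact_cball] by (simp add: g_def)
  then obtain B where B: "B > 0" "\<And>l. l \<in> cball 0 1 \<Longrightarrow> norm (g l) \<le> B"
    using compact_imp_bounded bounded_pos by (metis image_eqI)
  define Lc where "Lc = B * norm u * B"
  have Lc0: "Lc \<ge> 0" using B by (simp add: Lc_def)
  have Lip: "norm (g l - g m) \<le> Lc * cmod (l - m)" if "cmod l \<le> 1" "cmod m \<le> 1" for l m
  proof -
    have "g l - g m = scaleC (l - m) (g l * u * g m)"
      by (rule resolvent_id[OF gL[OF that(1)] gR[OF that(2)]])
    then have "norm (g l - g m) = cmod (l - m) * norm (g l * u * g m)" by (simp add: norm_scaleC)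
    also have "norm (g l * u * g m) \<le> Lc"
    proof -
      have "norm (g l * u * g m) \<le> norm (g l * u) * norm (g m)" by (rule norm_mult_ineq)
      also have "\<dots> \<le> (norm (g l) * norm u) * norm (g m)"
        by (rule mult_right_mono[OF norm_mult_ineq norm_ge_zero])
      also have "\<dots> \<le> (B * norm u) * B"
        using B that by (intro mult_mono) (auto intro: mult_right_mono)
      finally show ?thesis by (simp add: Lc_def)
    qed
    then have "cmod (l - m) * norm (g l * u * g m) \<le> cmod (l - m) * Lc" by (rule mult_left_mono) simp
    finally show ?thesis by (simp add: mult.commute)
  qed
  define e where "e K = Lc * cmod (1 - exp (of_real (pi / real K) * \<i>))" for K :: nat
  have e0: "e \<longlonglongrightarrow> 0"
  proof -
    have "(\<lambda>K. of_real (pi / real K) * \<i>) \<longlonglongrightarrow> of_real 0 * \<i>"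
      by (intro tendsto_intros)
    then have "(\<lambda>K. exp (of_real (pi / real K) * \<i>)) \<longlonglongrightarrow> exp (of_real 0 * \<i>)"
      by (rule tendsto_exp)
    then have "(\<lambda>K. Lc * cmod (1 - exp (of_real (pi / real K) * \<i>))) \<longlonglongrightarrow> Lc * cmod (1 - exp (of_real 0 * \<i>))"
      by (intro tendsto_intros)
    then show ?thesis unfolding e_def[abs_def] by simp
  qed
  have ev: "eventually (\<lambda>K. e K < 1/8 \<and> K > 0) sequentially"
  proof -
    have "eventually (\<lambda>K. e K < 1/8) sequentially" by (rule order_tendstoD(2)[OF e0]) simp
    then show ?thesis using eventually_gt_at_top[of 0] by (rule eventually_conj)
  qed
  have main: "eventually (\<lambda>K. norm (u ^ K) \<le> 9/8 * e K) sequentially"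
    using ev
  proof eventually_elim
    fix K assume K: "e K < 1/8 \<and> K > 0"
    have est: "2 * norm (scaleC (of_real (\<rho> ^ K)) (u ^ K))
      \<le> (1 + norm (scaleC (of_real (\<rho> ^ K)) (u ^ K))) ^ 2 * e K" if "0 \<le> \<rho>" "\<rho> \<le> 1" for \<rho>
      using key_est[OF gL gR Lip Lc0 _ that, of K] K by (simp add: e_def)
    have ns: "norm (scaleC (of_real (\<rho> ^ K)) (u ^ K)) = \<rho> ^ K * norm (u ^ K)" if "0 \<le> \<rho>" for \<rho>
      using that by (simp add: norm_scaleC norm_power)
    have eK0: "e K \<ge> 0" using Lc0 by (simp add: e_def)
    have half: "norm (u ^ K) \<le> 1/2"
    proof (rule ccontr)
      assume "\<not> norm (u ^ K) \<le> 1/2"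
      then have n: "norm (u ^ K) > 1/2" by simp
      define \<rho> where "\<rho> = root K (1 / (2 * norm (u ^ K)))"
      have rK: "\<rho> ^ K = 1 / (2 * norm (u ^ K))" using K n by (simp add: \<rho>_def)
      have r0: "0 \<le> \<rho>" using n by (simp add: \<rho>_def real_root_ge_zero)
      have r1: "\<rho> \<le> 1" using K n by (simp add: \<rho>_def divide_le_eq)
      have X: "norm (scaleC (of_real (\<rho> ^ K)) (u ^ K)) = 1/2"
      proof -
        have "\<rho> ^ K * norm (u ^ K) = 1/2" using rK n by (auto simp add: field_simps)
        then show ?thesis by (simp only: ns[OF r0])
      qed
      from est[OF r0 r1] have "2 * (1/2) \<le> (1 + 1/2) ^ 2 * e K" by (simp only: X)
      then have "1 \<le> (3/2) ^ 2 * e K" by simp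
      with K show False by (simp add: power2_eq_square)
    qed
    have "2 * norm (u ^ K) \<le> (1 + norm (u ^ K)) ^ 2 * e K"
      using est[of 1] ns[of 1] by simp
    also have "\<dots> \<le> (3/2) ^ 2 * e K"
      using half eK0 by (intro mult_right_mono power_mono) auto
    finally show "norm (u ^ K) \<le> 9/8 * e K" by (simp add: power2_eq_square)
  qed
  have "(\<lambda>K. 9/8 * e K) \<longlonglongrightarrow> 0" using tendsto_mult_right_zero[OF e0] by simp
  then show ?thesis by (rule Lim_null_comparison[OF main])
qed




lemma inv_one: "inv_in (1::'a::ring_1)" by (auto simp: inv_in_def)

lemma inv_mult: fixes a b :: "'a::ring_1" assumes "inv_in a" "inv_in b" shows "inv_in (a * b)"
proof -
  obtain a' where a: "a * a' = 1" "a' * a = 1" using assms(1) by (auto simp: inv_in_def)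
  obtain b' where b: "b * b' = 1" "b' * b = 1" using assms(2) by (auto simp: inv_in_def)
  have "(a * b) * (b' * a') = 1" by (simp add: mult.assoc[symmetric]) (simp add: mult.assoc b a)
  moreover have "(b' * a') * (a * b) = 1" by (simp add: mult.assoc[symmetric]) (simp add: mult.assoc a b)
  ultimately show ?thesis by (auto simp: inv_in_def)
qed

lemma inv_lr: fixes a :: "'a::ring_1" assumes "a * b = 1" "c * a = 1" shows "inv_in a"
proof -
  have "c = b" by (metis assms mult.assoc mult_1_left mult_1_right)
  then show ?thesis using assms by (auto simp: inv_in_def)
qed

lemma inv_factor: fixes a b :: "'a::ring_1" assumes "a * b = b * a" "inv_in (a * b)"
  shows "inv_in a" "inv_in b"
proof -
  obtain y where y: "(a * b) * y = 1" "y * (a * b) = 1" using assms(2) by (auto simp: inv_in_def)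
  have "a * (b * y) = 1" using y by (simp add: mult.assoc)
  moreover have "(y * b) * a = 1" using y assms(1) by (simp add: mult.assoc)
  ultimately show "inv_in a" by (rule inv_lr)
  have "b * (a * y) = 1" using y assms(1) by (simp add: mult.assoc[symmetric])
  moreover have "(y * a) * b = 1" using y by (simp add: mult.assoc)
  ultimately show "inv_in b" by (rule inv_lr)
qed

lemma inv_commute: fixes a b d :: "'a::ring_1" assumes "a * b = 1" "b * a = 1" "d * a = a * d"
  shows "d * b = b * d"
proof -
  have "d * b = b * a * d * b" using assms(2) by simp
  also have "\<dots> = b * d * a * b" using assms(3) by (simp add: mult.assoc)
  also have "\<dots> = b * d" using assms(1) by (simp add: mult.assoc)
  finally show ?thesis .
qed

lemma inv_scaleC: fixes a :: "'a::cx_algebra_1" assumes "inv_in a" "z \<noteq> 0" shows "inv_in (scaleC z a)"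
proof -
  obtain b where b: "a * b = 1" "b * a = 1" using assms(1) by (auto simp: inv_in_def)
  have "scaleC z a * scaleC (1/z) b = 1" using assms(2) b
    by (simp add: scaleC_mult_left scaleC_mult_right scaleC_scaleC scaleC_one)
  moreover have "scaleC (1/z) b * scaleC z a = 1" using assms(2) b
    by (simp add: scaleC_mult_left scaleC_mult_right scaleC_scaleC scaleC_one)
  ultimately show ?thesis by (auto simp: inv_in_def)
qed

lemma comm_power_mult: fixes c d :: "'a::ring_1" assumes "c * d = d * c" shows "(c * d) ^ n = c ^ n * d ^ n"
proof (induction n)
  case 0 then show ?case by simp
next
  case (Suc n)
  have dc: "d * c ^ n = c ^ n * d" using power_commuting_commutes[OF assms, of n] by simp
  have "(c * d) ^ Suc n = c * d * (c ^ n * d ^ n)" by (simp add: Suc)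
  also have "\<dots> = c * (d * c ^ n) * d ^ n" by (simp add: mult.assoc)
  also have "\<dots> = c ^ Suc n * d ^ Suc n" by (simp add: dc mult.assoc)
  finally show ?case .
qed

definition sqnil :: "'a::real_normed_algebra_1 \<Rightarrow> bool" where
  "sqnil c \<longleftrightarrow> (\<forall>r>0. eventually (\<lambda>n. norm (c ^ n) \<le> r ^ n) sequentially)"

lemma sqnil_mult: fixes c d :: "'a::real_normed_algebra_1"
  assumes "sqnil c" "c * d = d * c" shows "sqnil (c * d)"
  unfolding sqnil_def
proof (intro allI impI)
  fix r :: real assume r: "r > 0"
  define s where "s = r / (norm d + 1)"
  have pos: "norm d + 1 > 0" by (smt (verit) norm_ge_zero)
  have s: "s > 0" unfolding s_def using r pos by (rule divide_pos_pos)
  have sd: "s * norm d \<le> r"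
  proof -
    have "s * norm d \<le> s * (norm d + 1)" using s by simp
    also have "\<dots> = r" using pos by (simp add: s_def)
    finally show ?thesis .
  qed
  from assms(1) s have "eventually (\<lambda>n. norm (c ^ n) \<le> s ^ n) sequentially" by (simp add: sqnil_def)
  then show "eventually (\<lambda>n. norm ((c * d) ^ n) \<le> r ^ n) sequentially"
  proof eventually_elim
    fix n assume n: "norm (c ^ n) \<le> s ^ n"
    have "norm ((c * d) ^ n) = norm (c ^ n * d ^ n)" by (simp add: comm_power_mult[OF assms(2)])
    also have "\<dots> \<le> norm (c ^ n) * norm (d ^ n)" by (rule norm_mult_ineq)
    also have "\<dots> \<le> s ^ n * norm d ^ n"
      using n by (intro mult_mono norm_power_ineq) (auto simp: s less_imp_le)
    also have "\<dots> = (s * norm d) ^ n" by (simp add: power_mult_distrib)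
    also have "\<dots> \<le> r ^ n" using sd s by (intro power_mono) auto
    finally show "norm ((c * d) ^ n) \<le> r ^ n" .
  qed
qed

lemma sqnil_tendsto: fixes v :: "'a::real_normed_algebra_1" assumes "sqnil v" shows "(\<lambda>n. v ^ n) \<longlonglongrightarrow> 0"
proof (rule Lim_null_comparison)
  show "eventually (\<lambda>n. norm (v ^ n) \<le> (1/2) ^ n) sequentially" using assms by (simp add: sqnil_def)
  show "(\<lambda>n. (1/2::real) ^ n) \<longlonglongrightarrow> 0" by (rule LIMSEQ_power_zero) simp
qed

lemma sqnil_one_minus_inv: fixes v :: "'a::cx_banach_algebra_1" assumes "sqnil v" shows "inv_in (1 - v)"
proof -
  have ev: "eventually (\<lambda>n. norm (v ^ n) \<le> (1/2) ^ n) sequentially" using assms by (simp add: sqnil_def)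
  have sm: "summable (\<lambda>n. v ^ n)"
  proof (rule summable_comparison_test_ev)
    show "eventually (\<lambda>n. norm (v ^ n) \<le> (1/2::real) ^ n) sequentially" using ev by simp
    show "summable (\<lambda>n. (1/2::real) ^ n)" by (rule summable_geometric) simp
  qed
  define S where "S = suminf (\<lambda>n. v ^ n)"
  have ps: "(\<lambda>N. \<Sum>n<N. v ^ n) \<longlonglongrightarrow> S" using summable_LIMSEQ[OF sm] by (simp add: S_def)
  have v0: "(\<lambda>N. v ^ N) \<longlonglongrightarrow> 0" by (rule sqnil_tendsto[OF assms])
  have "(\<lambda>N. (1 - v) * (\<Sum>n<N. v ^ n)) \<longlonglongrightarrow> (1 - v) * S" by (intro tendsto_intros ps)
  moreover have "(\<lambda>N. (1 - v) * (\<Sum>n<N. v ^ n)) \<longlonglongrightarrow> 1 - 0"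
    unfolding geom_ring(1)[symmetric] by (intro tendsto_intros v0)
  ultimately have a: "(1 - v) * S = 1" using LIMSEQ_unique by fastforce
  have "(\<lambda>N. (\<Sum>n<N. v ^ n) * (1 - v)) \<longlonglongrightarrow> S * (1 - v)" by (intro tendsto_intros ps)
  moreover have "(\<lambda>N. (\<Sum>n<N. v ^ n) * (1 - v)) \<longlonglongrightarrow> 1 - 0"
    unfolding geom_ring(2)[symmetric] by (intro tendsto_intros v0)
  ultimately have b: "S * (1 - v) = 1" using LIMSEQ_unique by fastforce
  from a b show ?thesis by (auto simp: inv_in_def)
qed

lemma sqnil_not_inv: fixes v :: "'a::real_normed_algebra_1" assumes "sqnil v" shows "\<not> inv_in v"
proof
  assume "inv_in v"
  then obtain b where b: "v * b = 1" "b * v = 1" by (auto simp: inv_in_def)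
  have vb: "v * b = b * v" using b by simp
  define s where "s = 1 / (2 * (norm b + 1))"
  have pos: "2 * (norm b + 1) > 0" by (smt (verit) norm_ge_zero)
  have s: "s > 0" unfolding s_def using pos by simp
  have sb: "s * norm b \<le> 1/2"
  proof -
    have "s * norm b \<le> s * (norm b + 1)" using s by simp
    also have "\<dots> = 1/2" using pos by (simp add: s_def)
    finally show ?thesis .
  qed
  from assms s have "eventually (\<lambda>n. norm (v ^ n) \<le> s ^ n) sequentially" by (simp add: sqnil_def)
  then obtain N where N: "\<And>n. n \<ge> N \<Longrightarrow> norm (v ^ n) \<le> s ^ n" by (auto simp: eventually_sequentially)
  define n where "n = Suc N"
  have "v ^ n * b ^ n = 1" using comm_power_mult[OF vb, of n] b by simp
  then have "1 = norm (v ^ n * b ^ n)" by simp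
  also have "\<dots> \<le> norm (v ^ n) * norm (b ^ n)" by (rule norm_mult_ineq)
  also have "\<dots> \<le> s ^ n * norm b ^ n" using N[of n] by (intro mult_mono norm_power_ineq) (auto simp: n_def s less_imp_le)
  also have "\<dots> = (s * norm b) ^ n" by (simp add: power_mult_distrib)
  also have "\<dots> \<le> (1/2) ^ n" using sb s by (intro power_mono) auto
  also have "\<dots> < 1" using power_le_one[of "1/2::real" N] by (simp add: n_def)
  finally show False by simp
qed

lemma scaleC_one_minus: fixes c :: "'a::cx_algebra_1" assumes "z \<noteq> 0"
  shows "c - scaleC z 1 = scaleC (- z) (1 - scaleC (1/z) c)"
  using assms by (simp add: scaleC_diff_right scaleC_scaleC scaleC_minus_left scaleC_one)

lemma sqnil_scale: fixes c :: "'a::cx_banach_algebra_1" assumes "sqnil c" shows "sqnil (scaleC z c)"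
proof -
  have "scaleC z c = c * scaleC z 1" by (rule scaleC_conv_mult2)
  moreover have "c * scaleC z 1 = scaleC z 1 * c" by (simp add: scaleC_commute)
  ultimately show ?thesis using sqnil_mult[OF assms] by simp
qed

lemma sqnil_imp_qnil: fixes c :: "'a::cx_banach_algebra_1" assumes "sqnil c" shows "qnil c"
proof -
  have "z \<in> cspectrum c \<longleftrightarrow> z = 0" for z
  proof (cases "z = 0")
    case True then show ?thesis using sqnil_not_inv[OF assms] by (simp add: cspectrum_def)
  next
    case False
    have "inv_in (1 - scaleC (1/z) c)" by (rule sqnil_one_minus_inv[OF sqnil_scale[OF assms]])
    then have "inv_in (c - scaleC z 1)" using False by (simp add: scaleC_one_minus inv_scaleC)
    then show ?thesis using False by (simp add: cspectrum_def)
  qed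
  then show ?thesis by (auto simp: qnil_def)
qed

lemma qnil_imp_sqnil: fixes c :: "'a::cx_banach_algebra_1" assumes "qnil c" shows "sqnil c"
  unfolding sqnil_def
proof (intro allI impI)
  fix r :: real assume r: "r > 0"
  define u where "u = scaleC (of_real (1/r)) c"
  have H: "inv_in (1 - scaleC l u)" if "cmod l \<le> 1" for l
  proof (cases "l = 0")
    case True then show ?thesis by (simp add: inv_one)
  next
    case False
    define z where "z = of_real r / l"
    have z: "z \<noteq> 0" using False r by (simp add: z_def)
    have "inv_in (c - scaleC z 1)" using assms z by (auto simp: qnil_def cspectrum_def)
    then have "inv_in (scaleC (- (1/z)) (c - scaleC z 1))" using z by (simp add: inv_scaleC)
    moreover have "scaleC (- (1/z)) (c - scaleC z 1) = 1 - scaleC l u"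
      using z r False by (simp add: u_def z_def scaleC_diff_right scaleC_scaleC scaleC_minus_left scaleC_one)
    ultimately show ?thesis by simp
  qed
  have "(\<lambda>n. u ^ n) \<longlonglongrightarrow> 0" by (rule powers_to_zero) (rule H)
  then have "eventually (\<lambda>n. norm (u ^ n) < 1) sequentially"
    using order_tendstoD(2)[OF tendsto_norm_zero] by fastforce
  then show "eventually (\<lambda>n. norm (c ^ n) \<le> r ^ n) sequentially"
  proof eventually_elim
    fix n assume n: "norm (u ^ n) < 1"
    have "norm (u ^ n) = (1/r) ^ n * norm (c ^ n)" using r by (simp add: u_def scaleC_power norm_scaleC norm_power power_divide norm_divide)
    with n have "(1/r) ^ n * norm (c ^ n) \<le> 1" by simp
    then show "norm (c ^ n) \<le> r ^ n" using r by (simp add: power_divide field_simps)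
  qed
qed

lemma spectrum_nonempty: fixes c :: "'a::cx_banach_algebra_1" shows "\<exists>z. \<not> inv_in (c - scaleC z 1)"
proof (rule ccontr)
  assume "\<not> ?thesis"
  then have all: "inv_in (c - scaleC z 1)" for z by blast
  from all[of 0] obtain b where b: "c * b = 1" "b * c = 1" by (auto simp: inv_in_def)
  have Hc: "inv_in (1 - scaleC l c)" for l
  proof (cases "l = 0")
    case True then show ?thesis by (simp add: inv_one)
  next
    case False
    have "inv_in (scaleC (- l) (c - scaleC (1/l) 1))" using False all by (simp add: inv_scaleC)
    moreover have "scaleC (- l) (c - scaleC (1/l) 1) = 1 - scaleC l c"
      using False by (simp add: scaleC_diff_right scaleC_scaleC scaleC_minus_left scaleC_one)
    ultimately show ?thesis by simp
  qed
  have Hb: "inv_in (1 - scaleC l b)" for l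
  proof -
    have "(c - scaleC l 1) * b = 1 - scaleC l b"
      using b by (simp add: algebra_simps scaleC_mult_left)
    moreover have "inv_in ((c - scaleC l 1) * b)"
      using all b by (intro inv_mult) (auto simp: inv_in_def)
    ultimately show ?thesis by simp
  qed
  have c0: "(\<lambda>n. c ^ n) \<longlonglongrightarrow> 0" by (rule powers_to_zero) (rule Hc)
  have b0: "(\<lambda>n. b ^ n) \<longlonglongrightarrow> 0" by (rule powers_to_zero) (rule Hb)
  have "(\<lambda>n. c ^ n * b ^ n) \<longlonglongrightarrow> 0 * 0" by (intro tendsto_intros c0 b0)
  moreover have "c ^ n * b ^ n = 1" for n
    using comm_power_mult[of c b n] b by simp
  ultimately have "(\<lambda>n. 1::'a) \<longlonglongrightarrow> 0" by simp
  then have "(1::'a) = 0" using LIMSEQ_unique tendsto_const by blast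
  then show False by simp
qed





lemma gchoose_half_le: "\<bar>(1/2::real) gchoose k\<bar> \<le> 1"
proof (induction k)
  case 0 then show ?case by simp
next
  case (Suc k)
  have eq: "of_nat (Suc k) * ((1/2::real) gchoose Suc k) = (1/2 - of_nat k) * ((1/2) gchoose k)"
    using gbinomial_mult_1[of "1/2::real" k] by (simp add: algebra_simps)
  have "of_nat (Suc k) * \<bar>(1/2::real) gchoose Suc k\<bar> = \<bar>1/2 - of_nat k\<bar> * \<bar>(1/2) gchoose k\<bar>"
    using arg_cong[OF eq, of abs] by (simp add: abs_mult)
  also have "\<dots> \<le> of_nat (Suc k) * 1"
    using Suc by (intro mult_mono) auto
  finally show ?case by simp
qed

lemma sqrt_exists:
  fixes c :: "'a::cx_banach_algebra_1"
  assumes c: "sqnil c"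
  shows "\<exists>r. c * r = r * c \<and> (1 + c * r) * (1 + c * r) = 1 + 4 * c"
proof -
  define a where "a n = ((1/2::real) gchoose n) * 4 ^ n" for n
  define f where "f n = a n *\<^sub>R c ^ n" for n
  have ev: "eventually (\<lambda>n. norm (c ^ n) \<le> (1/8) ^ n) sequentially" using c by (simp add: sqnil_def)
  have na: "\<bar>a n\<bar> \<le> 4 ^ n" for n using gchoose_half_le[of n] by (simp add: a_def abs_mult)
  have sf: "summable (\<lambda>n. norm (f n))"
  proof (rule summable_comparison_test_ev)
    show "eventually (\<lambda>n. norm (norm (f n)) \<le> (1/2::real) ^ n) sequentially"
      using ev
    proof eventually_elim
      fix n assume n: "norm (c ^ n) \<le> (1/8) ^ n"
      have "norm (norm (f n)) = \<bar>a n\<bar> * norm (c ^ n)" by (simp add: f_def)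
      also have "\<dots> \<le> 4 ^ n * (1/8) ^ n" using na[of n] n by (intro mult_mono) auto
      also have "\<dots> = (1/2) ^ n" by (simp add: power_mult_distrib[symmetric])
      finally show "norm (norm (f n)) \<le> (1/2::real) ^ n" .
    qed
    show "summable (\<lambda>n. (1/2::real) ^ n)" by (rule summable_geometric) simp
  qed
  define s where "s = suminf f"
  have cp: "(\<lambda>k. \<Sum>i\<le>k. f i * f (k - i)) sums (s * s)"
    using Cauchy_product_sums[OF sf sf] by (simp add: s_def)
  have tm: "(\<Sum>i\<le>k. f i * f (k - i)) = (4 ^ k * ((1::real) gchoose k)) *\<^sub>R c ^ k" for k
  proof -
    have "(\<Sum>i\<le>k. f i * f (k - i)) = (\<Sum>i\<le>k. (a i * a (k - i)) *\<^sub>R c ^ k)"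
    proof (rule sum.cong)
      fix i assume "i \<in> {..k}"
      then have "c ^ i * c ^ (k - i) = c ^ k" by (simp add: power_add[symmetric])
      then show "f i * f (k - i) = (a i * a (k - i)) *\<^sub>R c ^ k" by (simp add: f_def)
    qed simp
    also have "\<dots> = (\<Sum>i\<le>k. a i * a (k - i)) *\<^sub>R c ^ k" by (simp add: scaleR_sum_left)
    also have "(\<Sum>i\<le>k. a i * a (k - i)) = 4 ^ k * (\<Sum>i\<le>k. ((1/2::real) gchoose i) * ((1/2) gchoose (k - i)))"
    proof -
      have "(\<Sum>i\<le>k. a i * a (k - i)) = (\<Sum>i\<le>k. 4 ^ k * (((1/2::real) gchoose i) * ((1/2) gchoose (k - i))))"
      proof (rule sum.cong)
        fix i assume "i \<in> {..k}"
        then have "(4::real) ^ i * 4 ^ (k - i) = 4 ^ k" by (simp add: power_add[symmetric])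
        then show "a i * a (k - i) = 4 ^ k * (((1/2::real) gchoose i) * ((1/2) gchoose (k - i)))"
          by (simp add: a_def algebra_simps)
      qed simp
      then show ?thesis by (simp add: sum_distrib_left)
    qed
    also have "(\<Sum>i\<le>k. ((1/2::real) gchoose i) * ((1/2) gchoose (k - i))) = (1/2 + 1/2) gchoose k"
      using gbinomial_Vandermonde[of "1/2::real" "1/2" k] by (simp add: atLeast0AtMost)
    finally show ?thesis by simp
  qed
  have g1: "(1::real) gchoose k = of_nat (1 choose k)" for k
    using binomial_gbinomial[of 1 k, where 'a=real] by simp
  have "(\<lambda>k. (4 ^ k * ((1::real) gchoose k)) *\<^sub>R c ^ k) sums (\<Sum>k\<in>{0,1}. (4 ^ k * ((1::real) gchoose k)) *\<^sub>R c ^ k)"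
    by (rule sums_finite) (auto simp: g1)
  then have "(\<lambda>k. (4 ^ k * ((1::real) gchoose k)) *\<^sub>R c ^ k) sums (1 + 4 * c)"
    by (simp add: scaleR_conv_of_real)
  then have ss: "s * s = 1 + 4 * c" using cp tm sums_unique2 by (metis (no_types, lifting) ext)
  have sf1: "summable (\<lambda>n. a (Suc n) *\<^sub>R c ^ n)"
  proof (rule summable_comparison_test_ev)
    show "eventually (\<lambda>n. norm (a (Suc n) *\<^sub>R c ^ n) \<le> 4 * (1/2::real) ^ n) sequentially"
      using ev
    proof eventually_elim
      fix n assume n: "norm (c ^ n) \<le> (1/8) ^ n"
      have "norm (a (Suc n) *\<^sub>R c ^ n) = \<bar>a (Suc n)\<bar> * norm (c ^ n)" by simp
      also have "\<dots> \<le> 4 ^ Suc n * (1/8) ^ n" using na[of "Suc n"] n by (intro mult_mono) auto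
      also have "\<dots> = 4 * (1/2) ^ n" by (simp add: power_mult_distrib[symmetric])
      finally show "norm (a (Suc n) *\<^sub>R c ^ n) \<le> 4 * (1/2::real) ^ n" .
    qed
    show "summable (\<lambda>n. 4 * (1/2::real) ^ n)" by (intro summable_mult summable_geometric) simp
  qed
  define r where "r = suminf (\<lambda>n. a (Suc n) *\<^sub>R c ^ n)"
  have "s = f 0 + (\<Sum>n. f (Suc n))"
    using suminf_split_head[OF summable_norm_cancel[OF sf]] by (simp add: s_def)
  also have "f 0 = 1" by (simp add: f_def a_def)
  also have "(\<Sum>n. f (Suc n)) = (\<Sum>n. c * (a (Suc n) *\<^sub>R c ^ n))"
    by (simp add: f_def)
  also have "\<dots> = c * r" using suminf_mult[OF sf1, of c] by (simp add: r_def)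
  finally have sr: "s = 1 + c * r" .
  have "c * r = (\<Sum>n. c * (a (Suc n) *\<^sub>R c ^ n))" using suminf_mult[OF sf1, of c] by (simp add: r_def)
  also have "\<dots> = (\<Sum>n. (a (Suc n) *\<^sub>R c ^ n) * c)" by (simp add: power_commutes)
  also have "\<dots> = r * c" using suminf_mult2[OF sf1, of c] by (simp add: r_def)
  finally have "c * r = r * c" .
  with ss sr show ?thesis by blast
qed




lemma idem_inv:
  fixes p X Y :: "'a::ring_1"
  assumes pp: "p * p = p" and Xp: "X * p = p * X" and Yp: "Y * p = p * Y"
    and X: "inv_in X" and Y: "inv_in Y"
  shows "inv_in (X * p + Y * (1 - p))"
proof -
  obtain X' where X': "X * X' = 1" "X' * X = 1" using X by (auto simp: inv_in_def)
  obtain Y' where Y': "Y * Y' = 1" "Y' * Y = 1" using Y by (auto simp: inv_in_def)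
  have X'p: "p * X' = X' * p" by (rule inv_commute[OF X' Xp[symmetric]])
  have Y'p: "p * Y' = Y' * p" by (rule inv_commute[OF Y' Yp[symmetric]])
  have p1: "p * (1 - p) = 0" "(1 - p) * p = 0" using pp by (simp_all add: algebra_simps)
  have q1: "(1 - p) * (1 - p) = 1 - p" using pp by (simp add: algebra_simps)
  have Xq: "X * (1 - p) = (1 - p) * X" using Xp by (simp add: algebra_simps)
  have Yq: "Y * (1 - p) = (1 - p) * Y" using Yp by (simp add: algebra_simps)
  have X'q: "X' * (1 - p) = (1 - p) * X'" using X'p by (simp add: algebra_simps)
  have Y'q: "Y' * (1 - p) = (1 - p) * Y'" using Y'p by (simp add: algebra_simps)
  define W where "W = X' * p + Y' * (1 - p)"
  have "(X * p + Y * (1 - p)) * W = X * (p * X') * p + X * (p * Y') * (1 - p) + Y * ((1 - p) * X') * p + Y * ((1 - p) * Y') * (1 - p)"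
    by (simp add: W_def algebra_simps)
  also have "\<dots> = (X * X') * (p * p) + (X * Y') * (p * (1 - p)) + (Y * X') * ((1 - p) * p) + (Y * Y') * ((1 - p) * (1 - p))"
    by (simp only: X'p Y'p X'q[symmetric] Y'q[symmetric] mult.assoc)
  also have "\<dots> = 1" by (simp add: X' Y' pp p1 q1)
  finally have a: "(X * p + Y * (1 - p)) * W = 1" .
  have "W * (X * p + Y * (1 - p)) = X' * (p * X) * p + X' * (p * Y) * (1 - p) + Y' * ((1 - p) * X) * p + Y' * ((1 - p) * Y) * (1 - p)"
    by (simp add: W_def algebra_simps)
  also have "\<dots> = (X' * X) * (p * p) + (X' * Y) * (p * (1 - p)) + (Y' * X) * ((1 - p) * p) + (Y' * Y) * ((1 - p) * (1 - p))"
    by (simp only: Xp[symmetric] Yp[symmetric] Xq[symmetric] Yq[symmetric] mult.assoc)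
  also have "\<dots> = 1" by (simp add: X' Y' pp p1 q1)
  finally have b: "W * (X * p + Y * (1 - p)) = 1" .
  from a b show ?thesis by (auto simp: inv_in_def)
qed

lemma qnil_shift_inv:
  fixes N :: "'a::cx_algebra_1"
  assumes "qnil N" "z \<noteq> 0" shows "inv_in (N - scaleC z 1)"
  using assms by (auto simp: qnil_def cspectrum_def)

lemma hirano_inv:
  fixes a x :: "'a::cx_algebra_1"
  assumes xax: "x * a * x = x" and ax: "a * x = x * a" and q: "qnil (a ^ 2 - a * x)"
    and l: "l \<noteq> -1" "l \<noteq> 0" "l \<noteq> 1"
  shows "inv_in (a - scaleC l 1)"
proof -
  define p where "p = a * x"
  define N where "N = a ^ 2 - p"
  have pp: "p * p = p"
  proof -
    have "p * p = a * (x * a * x)" by (simp add: p_def mult.assoc)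
    then show ?thesis using xax by (simp add: p_def)
  qed
  have ap: "a * p = p * a" unfolding p_def by (metis ax mult.assoc)
  have Np: "N * p = p * N"
  proof -
    have "a * a * p = p * (a * a)" using ap by (metis mult.assoc)
    then show ?thesis by (simp add: N_def power2_eq_square algebra_simps pp)
  qed
  define X where "X = N - scaleC (l ^ 2 - 1) 1"
  define Y where "Y = N - scaleC (l ^ 2) 1"
  have l2: "l ^ 2 - 1 \<noteq> 0" using l by (auto simp: power2_eq_1_iff)
  have l3: "l ^ 2 \<noteq> 0" using l by simp
  have X: "inv_in X" unfolding X_def using q l2 by (simp add: qnil_shift_inv N_def p_def)
  have Y: "inv_in Y" unfolding Y_def using q l3 by (simp add: qnil_shift_inv N_def p_def)
  have Lp: "scaleC z 1 * p = p * scaleC z 1" for z by (rule scaleC_commute)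
  have Xp: "X * p = p * X" unfolding X_def by (simp only: left_diff_distrib right_diff_distrib Np Lp)
  have Yp: "Y * p = p * Y" unfolding Y_def by (simp only: left_diff_distrib right_diff_distrib Np Lp)
  have Lp2: "scaleC z 1 * p = scaleC z p" for z by (simp add: scaleC_mult_left)
  have "X * p + Y * (1 - p) = N * p - scaleC (l ^ 2 - 1) p + (N - scaleC (l ^ 2) 1) - (N * p - scaleC (l ^ 2) p)"
    unfolding X_def Y_def by (simp only: left_diff_distrib right_diff_distrib mult_1_right Lp2 add_diff_eq)
  also have "\<dots> = N + p - scaleC (l ^ 2) 1"
    by (simp add: scaleC_diff_left scaleC_one)
  also have "\<dots> = a * a - scaleC (l ^ 2) 1" by (simp add: N_def power2_eq_square)
  also have "\<dots> = (a - scaleC l 1) * (a + scaleC l 1)"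
  proof -
    have LL: "scaleC l 1 * scaleC l 1 = scaleC (l ^ 2) (1::'a)"
      by (simp add: scaleC_mult_left scaleC_scaleC power2_eq_square)
    have aL: "a * scaleC l 1 = scaleC l 1 * a" by (simp add: scaleC_commute)
    have "(a - scaleC l 1) * (a + scaleC l 1) = a * a + a * scaleC l 1 - scaleC l 1 * a - scaleC l 1 * scaleC l 1"
      by (simp add: algebra_simps)
    then show ?thesis using aL LL by simp
  qed
  finally have e: "inv_in ((a - scaleC l 1) * (a + scaleC l 1))"
    using idem_inv[OF pp Xp Yp X Y] by simp
  have c: "(a - scaleC l 1) * (a + scaleC l 1) = (a + scaleC l 1) * (a - scaleC l 1)"
  proof -
    have aL: "a * scaleC l 1 = scaleC l 1 * a" by (simp add: scaleC_commute)
    show ?thesis by (simp add: algebra_simps aL)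
  qed
  show ?thesis by (rule inv_factor(1)[OF c e])
qed


lemma m2_mult: "M2 a b c d * M2 a' b' c' d' = M2 (a*a' + b*c') (a*b' + b*d') (c*a' + d*c') (c*b' + d*d')"
  by (simp add: times_m2_def)
lemma m2_plus: "M2 a b c d + M2 a' b' c' d' = M2 (a + a') (b + b') (c + c') (d + d')"
  by (simp add: plus_m2_def)
lemma m2_minus: "M2 a b c d - M2 a' b' c' d' = M2 (a - a') (b - b') (c - c') (d - d')"
  by (simp add: minus_m2_def)
lemma m2_one: "(1::'a::ring_1 m2) = M2 1 0 0 1" by (simp add: one_m2_def)
lemma m2_zero: "(0::'a::ring_1 m2) = M2 0 0 0 0" by (simp add: zero_m2_def)
lemma m2_scaleC: "scaleC z (M2 a b c d) = M2 (scaleC z a) (scaleC z b) (scaleC z c) (scaleC z d)"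
  by (simp add: scaleC_m2_def)

lemma schur:
  fixes c :: "'a::cx_algebra_1"
  assumes "inv_in (M2 1 1 c 0 - scaleC l 1)"
  shows "inv_in (c - scaleC (l ^ 2 - l) 1)"
proof -
  define L where "L = scaleC l (1::'a)"
  have LL: "scaleC (l ^ 2 - l) 1 = L * L - L"
    by (simp add: L_def scaleC_diff_left scaleC_mult_left scaleC_scaleC power2_eq_square)
  have Lc: "L * z = z * L" for z by (simp add: L_def scaleC_commute)
  have Mm: "M2 1 1 c 0 - scaleC l 1 = M2 (1 - L) 1 c (- L)"
    by (simp add: m2_one m2_scaleC m2_minus L_def)
  obtain Y where Y: "(M2 (1 - L) 1 c (- L)) * Y = 1" "Y * (M2 (1 - L) 1 c (- L)) = 1"
    using assms Mm by (auto simp: inv_in_def)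
  obtain p q r s where Yd: "Y = M2 p q r s" by (cases Y)
  have e1: "(1 - L) * q + s = 0" and e2: "c * q - L * s = 1"
    using Y(1) by (simp_all add: Yd m2_mult m2_one algebra_simps)
  have "Y * M2 (1 - L) 1 c (- L) = M2 (p*(1-L) + q*c) (p*1 + q*(-L)) (r*(1-L) + s*c) (r*1 + s*(-L))"
    by (simp only: Yd m2_mult)
  then have "M2 (p*(1-L) + q*c) (p*1 + q*(-L)) (r*(1-L) + s*c) (r*1 + s*(-L)) = M2 1 0 0 1"
    using Y(2) by (simp only: m2_one)
  then have e3: "p * (1 - L) + q * c = 1" and e4: "p * 1 + q * (- L) = 0" by (simp_all only: m2.inject)
  have sq: "s = L * q - q" using e1 by (simp add: algebra_simps eq_neg_iff_add_eq_0[symmetric])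
  have pq: "p = q * L" using e4 by (simp add: eq_neg_iff_add_eq_0[symmetric])
  have a: "(c - scaleC (l ^ 2 - l) 1) * q = 1"
  proof -
    have "(c - scaleC (l ^ 2 - l) 1) * q = c * q - L * (L * q - q)"
      by (simp add: LL algebra_simps)
    also have "\<dots> = 1" using e2 sq by simp
    finally show ?thesis .
  qed
  have b: "q * (c - scaleC (l ^ 2 - l) 1) = 1"
  proof -
    have "q * (c - scaleC (l ^ 2 - l) 1) = q * L * (1 - L) + q * c"
      by (simp add: LL algebra_simps)
    also have "\<dots> = 1" using e3 pq by simp
    finally show ?thesis .
  qed
  from a b show ?thesis by (auto simp: inv_in_def)
qed

lemma back_dir:
  fixes c :: "'a::cx_banach_algebra_1"
  assumes "g_hirano (M2 1 1 c 0)"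
  shows "qnil c"
proof -
  obtain x where x: "x * M2 1 1 c 0 * x = x" "M2 1 1 c 0 * x = x * M2 1 1 c 0"
    "qnil ((M2 1 1 c 0) ^ 2 - M2 1 1 c 0 * x)"
    using assms by (auto simp: g_hirano_def)
  have inv: "inv_in (c - scaleC m 1)" if m: "m \<noteq> 0" for m
  proof -
    define s where "s = csqrt (1 + 4 * m)"
    define l0 where "l0 = (1 + s) / 2"
    have ss: "s * s = 1 + 4 * m" using power2_csqrt[of "1 + 4 * m"] by (simp add: s_def power2_eq_square)
    have l0e: "l0 ^ 2 - l0 = m"
    proof -
      have "l0 ^ 2 - l0 = (s * s - 1) / 4" by (simp add: l0_def power2_eq_square field_simps)
      then show ?thesis using ss by simp
    qed
    define l where "l = (if l0 = -1 then 2 else l0)"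
    have le: "l ^ 2 - l = m" using l0e by (auto simp: l_def)
    have lne: "l \<noteq> -1" "l \<noteq> 0" "l \<noteq> 1" using le m by (auto simp: l_def)
    have "inv_in (M2 1 1 c 0 - scaleC l 1)" by (rule hirano_inv[OF x lne])
    then have "inv_in (c - scaleC (l ^ 2 - l) 1)" by (rule schur)
    then show ?thesis using le by simp
  qed
  obtain z where z: "\<not> inv_in (c - scaleC z 1)" using spectrum_nonempty by blast
  have "cspectrum c = {0}"
  proof -
    have "cspectrum c \<subseteq> {0}" using inv by (auto simp: cspectrum_def)
    moreover have "z \<in> cspectrum c" using z by (simp add: cspectrum_def)
    ultimately show ?thesis by auto
  qed
  then show ?thesis by (simp add: qnil_def)
qed




definition dg :: "'a::ring_1 \<Rightarrow> 'a m2" where "dg a = M2 a 0 0 a"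

lemma dg_mult: "dg a * dg b = dg (a * b)" by (simp add: dg_def m2_mult)
lemma dg_add: "dg a + dg b = dg (a + b)" by (simp add: dg_def m2_plus)
lemma dg_diff: "dg a - dg b = dg (a - b)" by (simp add: dg_def m2_minus)
lemma dg_one: "dg 1 = 1" by (simp add: dg_def m2_one)
lemma dg_scale: "scaleC z (1::'a::cx_algebra_1 m2) = dg (scaleC z 1)" by (simp add: dg_def m2_one m2_scaleC)
lemma dg_comm_M: "a * c = c * a \<Longrightarrow> dg a * M2 1 1 c 0 = M2 1 1 c 0 * dg a"
  by (simp add: dg_def m2_mult)
lemma dg_inv: "inv_in a \<Longrightarrow> inv_in (dg a)"
proof -
  assume "inv_in a"
  then obtain b where "a * b = 1" "b * a = 1" by (auto simp: inv_in_def)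
  then have "dg a * dg b = 1" "dg b * dg a = 1" by (simp_all add: dg_mult dg_one)
  then show ?thesis by (auto simp: inv_in_def)
qed
lemma dg_inv_rev: "inv_in (dg a) \<Longrightarrow> inv_in a"
proof -
  assume "inv_in (dg a)"
  then obtain Y where Y: "dg a * Y = 1" "Y * dg a = 1" by (auto simp: inv_in_def)
  obtain p q r s where Yd: "Y = M2 p q r s" by (cases Y)
  from Y(1) have "a * p = 1" by (simp add: Yd dg_def m2_mult m2_one)
  moreover from Y(2) have "p * a = 1" by (simp add: Yd dg_def m2_mult m2_one)
  ultimately show ?thesis by (auto simp: inv_in_def)
qed

lemma comm_add: "a * y = y * a \<Longrightarrow> b * y = y * b \<Longrightarrow> (a + b) * y = y * (a + b)"
  for a b y :: "'a::ring_1" by (simp add: distrib_left distrib_right)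
lemma comm_diff: "a * y = y * a \<Longrightarrow> b * y = y * b \<Longrightarrow> (a - b) * y = y * (a - b)"
  for a b y :: "'a::ring_1" by (simp add: left_diff_distrib right_diff_distrib)
lemma comm_mult: "a * y = y * a \<Longrightarrow> b * y = y * b \<Longrightarrow> (a * b) * y = y * (a * b)"
  for a b y :: "'a::ring_1" by (metis mult.assoc)

lemma sqnil_shift_inv:
  fixes a :: "'a::cx_banach_algebra_1"
  assumes "sqnil a" "z \<noteq> 0" shows "inv_in (a - scaleC z 1)"
  using sqnil_imp_qnil[OF assms(1)] assms(2) by (rule qnil_shift_inv)

lemma fwd_dir:
  fixes c :: "'a::cx_banach_algebra_1"
  assumes "qnil c"
  shows "g_hirano (M2 1 1 c 0)"
proof -
  have c: "sqnil c" by (rule qnil_imp_sqnil[OF assms])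
  obtain r where rc: "c * r = r * c" and ss: "(1 + c * r) * (1 + c * r) = 1 + 4 * c"
    using sqrt_exists[OF c] by blast
  define r' where "r' = scaleC (1/2) r"
  define t where "t = c * r'"
  have r'c: "c * r' = r' * c" using rc by (simp add: r'_def scaleC_mult_left scaleC_mult_right)
  have tc: "t * c = c * t" unfolding t_def by (metis r'c mult.assoc)
  have tsq: "sqnil t" unfolding t_def by (rule sqnil_mult[OF c r'c])
  have ttc: "t * t + t = c"
  proof -
    define q where "q = c * r"
    have tq: "t = scaleC (1/2) q" by (simp add: t_def q_def r'_def scaleC_mult_right)
    have "1 + (q + q) + q * q = 1 + 4 * c" using ss by (simp add: q_def algebra_simps)
    then have h: "q * q + (q + q) = 4 * c" by (simp add: algebra_simps)
    have "t * t + t = scaleC (1/4) (q * q) + scaleC (1/4) (q + q)"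
    proof -
      have "scaleC (1/4) (q + q) = scaleC (1/2) q"
        by (simp add: scaleC_add_right scaleC_add_left[symmetric])
      then show ?thesis by (simp add: tq scaleC_mult_left scaleC_mult_right scaleC_scaleC)
    qed
    also have "\<dots> = scaleC (1/4) (4 * c)" by (simp add: scaleC_add_right[symmetric] h)
    also have "\<dots> = c"
    proof -
      have "(4::'a) * c = scaleC (of_nat 4) c" using scaleC_of_nat[of 4 c] by simp
      then show ?thesis by (simp add: scaleC_scaleC scaleC_one)
    qed
    finally show ?thesis .
  qed
  have two: "scaleC (-2) t = - (t + t)"
  proof -
    have "scaleC 2 t = scaleC (1 + 1) t" by simp
    also have "\<dots> = t + t" by (simp only: scaleC_add_left scaleC_one)
    finally show ?thesis by (simp add: scaleC_minus_left)
  qed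
  have "inv_in (1 - scaleC (-2) t)" by (rule sqnil_one_minus_inv[OF sqnil_scale[OF tsq]])
  moreover have "1 - scaleC (-2) t = 1 + t + t" by (simp add: two)
  ultimately have "inv_in (1 + t + t)" by simp
  then obtain \<sigma> where \<sigma>: "(1 + t + t) * \<sigma> = 1" "\<sigma> * (1 + t + t) = 1"
    by (auto simp: inv_in_def)
  have "inv_in (1 - scaleC (-1) t)" by (rule sqnil_one_minus_inv[OF sqnil_scale[OF tsq]])
  then obtain \<nu> where \<nu>: "(1 + t) * \<nu> = 1" "\<nu> * (1 + t) = 1"
    by (auto simp: inv_in_def scaleC_minus_left scaleC_one)
  have \<sigma>t: "\<sigma> * t = t * \<sigma>"
    using inv_commute[OF \<sigma>, of t] by (simp add: algebra_simps)
  have \<nu>t: "\<nu> * t = t * \<nu>"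
    using inv_commute[OF \<nu>, of t] by (simp add: algebra_simps)
  have \<sigma>\<nu>: "\<sigma> * \<nu> = \<nu> * \<sigma>"
    using inv_commute[OF \<nu>, of \<sigma>] \<sigma>t by (simp add: algebra_simps)
  have commc: "a * c = c * a" if "a * t = t * a" for a
  proof -
    have tt: "a * (t * t) = (t * t) * a" by (metis that mult.assoc)
    have "a * (t * t + t) = (t * t + t) * a" by (simp only: distrib_left distrib_right tt that)
    then show ?thesis using ttc by simp
  qed
  define M where "M = M2 1 1 c 0"
  define T where "T = dg t"
  define S where "S = dg \<sigma>"
  define V where "V = dg \<nu>"
  have dgM: "dg a * M = M * dg a" if "a * t = t * a" for a
    unfolding M_def by (rule dg_comm_M[OF commc[OF that]])
  have TM: "T * M = M * T" unfolding T_def by (rule dgM) simp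
  have SM: "S * M = M * S" unfolding S_def by (rule dgM[OF \<sigma>t])
  have VM: "V * M = M * V" unfolding V_def by (rule dgM[OF \<nu>t])
  have ST: "S * T = T * S" by (simp add: S_def T_def dg_mult \<sigma>t)
  have VT: "V * T = T * V" by (simp add: V_def T_def dg_mult \<nu>t)
  have SV: "S * V = V * S" by (simp add: S_def V_def dg_mult \<sigma>\<nu>)
  have Msq: "M * M = M + T * T + T"
    by (simp add: M_def T_def dg_def m2_mult m2_plus ttc[symmetric])
  have S1: "S * (1 + T + T) = 1"
    using \<sigma>(2) \<sigma>t by (simp add: S_def T_def dg_mult dg_add dg_one[symmetric] algebra_simps)
  have V1: "V * (1 + T) = 1"
    using \<nu>(2) by (simp add: V_def T_def dg_mult dg_add dg_one[symmetric])
  define Q where "Q = M + T"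
  define P where "P = S * Q"
  define x where "x = V * P"
  have QQ: "Q * Q = (1 + T + T) * Q"
    by (simp add: Q_def distrib_left distrib_right Msq TM add_ac)
  have MQ: "M * Q = (1 + T) * Q"
    by (simp add: Q_def distrib_left distrib_right Msq TM add_ac)
  have QS: "Q * S = S * Q" by (simp add: Q_def distrib_left distrib_right SM ST)
  have QV: "Q * V = V * Q" by (simp add: Q_def distrib_left distrib_right VM VT)
  have QM: "Q * M = M * Q" by (simp add: Q_def distrib_left distrib_right TM)
  have PP: "P * P = P"
  proof -
    have "P * P = S * (Q * S) * Q" by (simp add: P_def mult.assoc)
    also have "\<dots> = S * (S * (Q * Q))" by (metis QS mult.assoc)
    also have "\<dots> = S * ((S * (1 + T + T)) * Q)" by (simp add: QQ mult.assoc)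
    finally show ?thesis by (simp add: S1 P_def)
  qed
  have Mx: "M * x = P"
  proof -
    have "M * x = (M * V) * (S * Q)" by (simp add: x_def P_def mult.assoc)
    also have "\<dots> = V * ((M * S) * Q)" by (metis VM mult.assoc)
    also have "\<dots> = V * (S * (M * Q))" by (metis SM mult.assoc)
    also have "\<dots> = V * (S * ((1 + T) * Q))" by (simp add: MQ)
    also have "S * ((1 + T) * Q) = (1 + T) * (S * Q)"
      by (simp add: distrib_left distrib_right ST mult.assoc[symmetric])
    also have "V * ((1 + T) * (S * Q)) = (V * (1 + T)) * (S * Q)" by (simp add: mult.assoc)
    finally show ?thesis by (simp add: V1 P_def)
  qed
  have xM: "x * M = M * x"
  proof -
    have "x * M = V * (S * (Q * M))" by (simp add: x_def P_def mult.assoc)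
    also have "\<dots> = V * ((S * M) * Q)" by (metis QM mult.assoc)
    also have "\<dots> = (V * M) * (S * Q)" by (metis SM mult.assoc)
    also have "\<dots> = M * x" unfolding x_def P_def by (metis VM mult.assoc)
    finally show ?thesis .
  qed
  have xMx: "x * M * x = x"
  proof -
    have "x * M * x = x * P" using Mx by (simp add: mult.assoc)
    also have "\<dots> = V * (P * P)" by (simp add: x_def mult.assoc)
    finally show ?thesis by (simp add: PP x_def)
  qed
  have Pq: "(1 + T + T) * P = Q"
  proof -
    have "(1 + T + T) * S = S * (1 + T + T)" by (simp add: distrib_left distrib_right ST)
    then have "(1 + T + T) * P = (S * (1 + T + T)) * Q" by (simp add: P_def mult.assoc[symmetric])
    then show ?thesis by (simp add: S1)
  qed
  have N: "M ^ 2 - M * x = T * T + (T + T) * P"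
  proof -
    have "M ^ 2 - M * x = M + T * T + T - P" by (simp add: power2_eq_square Msq Mx)
    also have "\<dots> = T * T + ((1 + T + T) * P - P)" by (simp only: Pq) (simp add: Q_def algebra_simps)
    also have "\<dots> = T * T + (T + T) * P" by (simp add: algebra_simps)
    finally show ?thesis .
  qed
  have dgP: "dg a * P = P * dg a" if "a * t = t * a" "a * \<sigma> = \<sigma> * a" for a
  proof -
    have aM: "dg a * M = M * dg a" by (rule dgM[OF that(1)])
    have aT: "dg a * T = T * dg a" using that by (simp add: T_def dg_mult)
    have aS: "dg a * S = S * dg a" using that by (simp add: S_def dg_mult)
    have aQ: "dg a * Q = Q * dg a" by (simp add: Q_def distrib_left distrib_right aM aT)
    have "dg a * P = S * (dg a * Q)" by (simp add: P_def aS mult.assoc[symmetric])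
    then show ?thesis by (simp add: aQ P_def mult.assoc)
  qed
  have TP: "T * P = P * T" unfolding T_def by (rule dgP) (simp_all add: \<sigma>t)
  have qN: "qnil (M ^ 2 - M * x)"
  proof -
    have "z \<in> cspectrum (M ^ 2 - M * x) \<longleftrightarrow> z = 0" for z
    proof (cases "z = 0")
      case True
      have "\<not> inv_in (T * T + (T + T) * P)"
      proof
        assume i: "inv_in (T * T + (T + T) * P)"
        have e: "T * T + (T + T) * P = T * (T + P + P)" by (simp add: algebra_simps)
        have cT: "T * (T + P + P) = (T + P + P) * T" by (simp add: algebra_simps TP)
        have "inv_in T" using inv_factor(1)[OF cT] i e by simp
        then have "inv_in t" unfolding T_def by (rule dg_inv_rev)
        with sqnil_not_inv[OF tsq] show False by simp
      qed
      then show ?thesis using True by (simp add: cspectrum_def N)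
    next
      case False
      define \<alpha> where "\<alpha> = t * t + t + t"
      define \<beta> where "\<beta> = t * t"
      have a_sq: "sqnil \<alpha>"
      proof -
        have "\<alpha> = t * (t + 1 + 1)" by (simp add: \<alpha>_def algebra_simps)
        moreover have "t * (t + 1 + 1) = (t + 1 + 1) * t" by (simp add: algebra_simps)
        ultimately show ?thesis using sqnil_mult[OF tsq] by simp
      qed
      have b_sq: "sqnil \<beta>" unfolding \<beta>_def by (rule sqnil_mult[OF tsq]) simp
      define X where "X = dg (\<alpha> - scaleC z 1)"
      define Y where "Y = dg (\<beta> - scaleC z 1)"
      have Xi: "inv_in X" unfolding X_def by (rule dg_inv[OF sqnil_shift_inv[OF a_sq False]])
      have Yi: "inv_in Y" unfolding Y_def by (rule dg_inv[OF sqnil_shift_inv[OF b_sq False]])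
      have zt: "scaleC z 1 * t = t * scaleC z 1" "scaleC z 1 * \<sigma> = \<sigma> * scaleC z 1"
        by (simp_all add: scaleC_commute)
      have tz: "(scaleC z 1) * y = y * scaleC z 1" for y by (rule scaleC_commute)
      have tsg: "t * \<sigma> = \<sigma> * t" using \<sigma>t by simp
      have XP: "X * P = P * X" unfolding X_def \<alpha>_def
        by (rule dgP; intro comm_diff comm_add comm_mult tz tsg refl)
      have YP: "Y * P = P * Y" unfolding Y_def \<beta>_def
        by (rule dgP; intro comm_diff comm_add comm_mult tz tsg refl)
      have eq: "X * P + Y * (1 - P) = (M ^ 2 - M * x) - scaleC z 1"
      proof -
        have "X * P + Y * (1 - P) = dg \<alpha> * P + dg \<beta> - dg \<beta> * P - dg (scaleC z 1)"
          by (simp add: X_def Y_def dg_diff[symmetric] algebra_simps)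
        also have "dg \<alpha> = T * T + T + T" by (simp add: \<alpha>_def T_def dg_mult dg_add)
        also have "dg \<beta> = T * T" by (simp add: \<beta>_def T_def dg_mult)
        finally show ?thesis by (simp add: N dg_scale algebra_simps)
      qed
      have "inv_in ((M ^ 2 - M * x) - scaleC z 1)"
        using idem_inv[OF PP XP YP Xi Yi] eq by simp
      then show ?thesis using False by (simp add: cspectrum_def)
    qed
    then show ?thesis by (auto simp: qnil_def)
  qed
  show ?thesis unfolding g_hirano_def M_def[symmetric]
    using xMx xM[symmetric] qN by (intro exI[of _ x] conjI)
qed


theorem theorem4p1:
  fixes c :: "'a::cx_banach_algebra_1"
  shows "qnil c \<longleftrightarrow> g_hirano (M2 1 1 c 0 :: 'a m2)"
  using fwd_dir back_dir by blast

end
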